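(* Assume $p_{X,Y}=p_Xp_{Y|X}$ satisfies $p_{X,Y}\ne p_Xp_Y$. (i) There exists a bijection $\sigma:\mathfrak{X}\to\mathfrak{X}$ such that, for $(X_1,Y_1)\sim p_{X,Y}$ and $X_2\sim p_X$ independent of $(X_1,Y_1)$, $$\Pr(\sigma(Y_1)=X_1)>\Pr(\sigma(Y_1)=X_2).$$ (ii) Fix such a $\sigma$. There is a constant $c>0$ depending only on $p_{X,Y}$ and $\sigma$ such that if the number of seeds satisfies $B\ge cn$ (in particular for some $B=\Theta(n)$, i.e. seed order $d=1$), then the estimate $$\hat I_{\mathrm{del}}(\sigma)=\arg\min_{I\subseteq[n],\,|I|=n-\tilde K} d_H\big(\tilde{\mathbf{G}}^{(1)}(I),\tilde{\mathbf{G}}^{(2)}_\sigma\big)$$ satisfies $\Pr\big(\hat I_{\mathrm{del}}(\sigma)=I_{\mathrm{del}}\big)\to1$ as $n\to\infty$, where $I_{\mathrm{del}}=\{j\in[n]:S_j=0\}$ and an error is declared whenever some $I\ne I_{\mathrm{del}}$ attains a distance no larger than that of $I_{\mathrm{del}}$.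
   Context: Seeds: $\mathbf{G}^{(1)}$ is a $B\times n$ matrix with i.i.d. entries from $p_X$ on the finite set $\mathfrak{X}$; $S^n$ has i.i.d. entries from $p_S$ on $\{0,\dots,s_{\max}\}$; $\mathbf{G}^{(2)}$ is the $B\times\sum_jS_j$ matrix obtained from $\mathbf{G}^{(1)}$ by replacing, in each row, entry $j$ by the empty string if $S_j=0$ and by $S_j$ conditionally i.i.d. outputs of the channel $p_{Y|X}$ with that entry as input if $S_j\ge1$ (rows of $\mathbf{G}^{(1)}$ and $\mathbf{G}^{(2)}$ correspond in order). $\tilde{\mathbf{G}}^{(2)}$ is the $B\times\tilde K$ matrix obtained from $\mathbf{G}^{(2)}$ by keeping exactly one of the $S_j$ noisy copies of each column $j$ with $S_j\ge1$ (so only deletions remain and $\tilde K=|\{j:S_j\ge1\}|$). $\tilde{\mathbf{G}}^{(2)}_\sigma$ is obtained by applying $\sigma$ entrywise to $\tilde{\mathbf{G}}^{(2)}$. For $I\subseteq[n]$ with $|I|=n-\tilde K$, $\tilde{\mathbf{G}}^{(1)}(I)$ is the $B\times\tilde K$ matrix obtained from $\mathbf{G}^{(1)}$ by discarding the columns with indices in $I$ (keeping the order of the rest). $d_H(\mathbf{A},\mathbf{A}')=\sum_{i\in[B]}\sum_{j\in[\tilde K]}\mathbb{1}[A_{i,j}\ne A'_{i,j}]$ for two $B\times\tilde K$ matrices. *)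

theory Defs
  imports "HOL-Probability.Probability"
begin

text \<open>Matrices are functions on index pairs (row i, column j), rows in [B] = {..<B},
  columns in [n] = {..<n} (0-based).\<close>

definition joint_pmf :: "'x pmf \<Rightarrow> ('x \<Rightarrow> 'y pmf) \<Rightarrow> ('x \<times> 'y) pmf" where
  "joint_pmf pX pYX = bind_pmf pX (\<lambda>x. map_pmf (\<lambda>y. (x, y)) (pYX x))"

definition out_pmf :: "'x pmf \<Rightarrow> ('x \<Rightarrow> 'y pmf) \<Rightarrow> 'y pmf" where
  "out_pmf pX pYX = bind_pmf pX pYX"

definition seed_G1 :: "'x pmf \<Rightarrow> nat \<Rightarrow> nat \<Rightarrow> (nat \<times> nat \<Rightarrow> 'x) pmf" where
  "seed_G1 pX B n = Pi_pmf ({..<B} \<times> {..<n}) undefined (\<lambda>_. pX)"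

definition rep_pattern :: "nat pmf \<Rightarrow> nat \<Rightarrow> (nat \<Rightarrow> nat) pmf" where
  "rep_pattern pS n = Pi_pmf {..<n} 0 (\<lambda>_. pS)"

text \<open>G2: entry (i,j) is the list of S j conditionally i.i.d. channel outputs with
  input G1(i,j) (empty list if S j = 0).\<close>
definition noisy_G2 :: "('x \<Rightarrow> 'y pmf) \<Rightarrow> nat \<Rightarrow> nat \<Rightarrow> (nat \<times> nat \<Rightarrow> 'x) \<Rightarrow> (nat \<Rightarrow> nat)
    \<Rightarrow> (nat \<times> nat \<Rightarrow> 'y list) pmf" where
  "noisy_G2 pYX B n G1 S =
     map_pmf (\<lambda>W (i, j). map (\<lambda>k. W (i, j, k)) [0..<S j])
       (Pi_pmf {(i, j, k). i < B \<and> j < n \<and> k < S j} undefined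
          (\<lambda>(i, j, k). pYX (G1 (i, j))))"

definition seeded_experiment :: "'x pmf \<Rightarrow> ('x \<Rightarrow> 'y pmf) \<Rightarrow> nat pmf \<Rightarrow> nat \<Rightarrow> nat
    \<Rightarrow> ((nat \<times> nat \<Rightarrow> 'x) \<times> (nat \<Rightarrow> nat) \<times> (nat \<times> nat \<Rightarrow> 'y list)) pmf" where
  "seeded_experiment pX pYX pS B n =
     bind_pmf (seed_G1 pX B n) (\<lambda>G1.
     bind_pmf (rep_pattern pS n) (\<lambda>S.
     map_pmf (\<lambda>G2. (G1, S, G2)) (noisy_G2 pYX B n G1 S)))"

definition retained_cols :: "(nat \<Rightarrow> nat) \<Rightarrow> nat \<Rightarrow> nat list" where
  "retained_cols S n = filter (\<lambda>j. 1 \<le> S j) [0..<n]"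

definition Ktilde :: "(nat \<Rightarrow> nat) \<Rightarrow> nat \<Rightarrow> nat" where
  "Ktilde S n = length (retained_cols S n)"

definition G2tilde :: "(nat \<times> nat \<Rightarrow> 'y list) \<Rightarrow> (nat \<Rightarrow> nat) \<Rightarrow> nat \<Rightarrow> (nat \<times> nat \<Rightarrow> 'y)" where
  "G2tilde G2 S n = (\<lambda>(i, t). hd (G2 (i, retained_cols S n ! t)))"

definition G1tilde :: "(nat \<times> nat \<Rightarrow> 'x) \<Rightarrow> nat \<Rightarrow> nat set \<Rightarrow> (nat \<times> nat \<Rightarrow> 'x)" where
  "G1tilde G1 n I = (\<lambda>(i, t). G1 (i, filter (\<lambda>j. j \<notin> I) [0..<n] ! t))"

definition hamming_dist :: "nat \<Rightarrow> nat \<Rightarrow> (nat \<times> nat \<Rightarrow> 'a) \<Rightarrow> (nat \<times> nat \<Rightarrow> 'a) \<Rightarrow> nat" where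
  "hamming_dist B K A A' = (\<Sum>i<B. \<Sum>j<K. if A (i, j) \<noteq> A' (i, j) then 1 else 0)"

definition I_del :: "(nat \<Rightarrow> nat) \<Rightarrow> nat \<Rightarrow> nat set" where
  "I_del S n = {j. j < n \<and> S j = 0}"

definition deletion_detected ::
  "('x \<Rightarrow> 'x) \<Rightarrow> nat \<Rightarrow> nat \<Rightarrow> (nat \<times> nat \<Rightarrow> 'x) \<Rightarrow> (nat \<Rightarrow> nat) \<Rightarrow> (nat \<times> nat \<Rightarrow> 'x list) \<Rightarrow> bool" where
  "deletion_detected \<sigma> B n G1 S G2 \<longleftrightarrow>
     (let K = Ktilde S n;
          Y = (\<sigma> \<circ> G2tilde G2 S n);
          D = (\<lambda>I. hamming_dist B K (G1tilde G1 n I) Y)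
      in \<forall>I. I \<subseteq> {..<n} \<and> card I = n - K \<and> I \<noteq> I_del S n \<longrightarrow> D (I_del S n) < D I)"

end

theory Submission
  imports Defs
begin

lemma Pi_pmf_map_idx:
  assumes "finite A"
  shows "Pi_pmf A d (\<lambda>c. map_pmf (f c) (q c)) =
         map_pmf (\<lambda>g c. if c \<in> A then f c (g c) else d) (Pi_pmf A d' q)"
proof -
  have "Pi_pmf A d (\<lambda>c. map_pmf (f c) (q c)) =
          Pi_pmf A d (\<lambda>c. q c \<bind> (\<lambda>x. return_pmf (f c x)))"
    by (simp add: map_pmf_def)
  also have "\<dots> = Pi_pmf A d' q \<bind> (\<lambda>g. Pi_pmf A d (\<lambda>c. return_pmf (f c (g c))))"
    by (rule Pi_pmf_bind[OF assms])
  also have "\<dots> = Pi_pmf A d' q \<bind> (\<lambda>g. return_pmf (\<lambda>c. if c \<in> A then f c (g c) else d))"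
    using assms by simp
  also have "\<dots> = map_pmf (\<lambda>g c. if c \<in> A then f c (g c) else d) (Pi_pmf A d' q)"
    by (simp add: map_pmf_def)
  finally show ?thesis .
qed

lemma Pi_pmf_reindex:
  assumes "finite A" "inj_on h A"
  shows "map_pmf (\<lambda>g x. if x \<in> A then g (h x) else d) (Pi_pmf (h ` A) d p) = Pi_pmf A d (\<lambda>x. p (h x))"
  using assms
proof (induction A rule: finite_induct)
  case empty
  then show ?case by simp
next
  case (insert x A)
  have hx: "h x \<notin> h ` A" using insert by auto
  have inj: "inj_on h A" using insert by auto
  have "Pi_pmf (insert x A) d (\<lambda>x. p (h x)) =
      map_pmf (\<lambda>(y,f). f(x:=y)) (pair_pmf (p (h x)) (Pi_pmf A d (\<lambda>x. p (h x))))"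
    by (rule Pi_pmf_insert) (use insert in auto)
  also have "\<dots> = map_pmf (\<lambda>(y,f). f(x:=y)) (pair_pmf (p (h x))
       (map_pmf (\<lambda>g x. if x \<in> A then g (h x) else d) (Pi_pmf (h ` A) d p)))"
    using insert.IH[OF inj] by simp
  also have "\<dots> = map_pmf (\<lambda>(y,g). (\<lambda>z. if z \<in> A then g (h z) else d)(x:=y)) (pair_pmf (p (h x)) (Pi_pmf (h ` A) d p))"
    by (simp add: pair_map_pmf2 map_pmf_comp case_prod_unfold apsnd_def map_prod_def)
  also have "\<dots> = map_pmf (\<lambda>g z. if z \<in> insert x A then g (h z) else d)
      (map_pmf (\<lambda>(y,f). f(h x:=y)) (pair_pmf (p (h x)) (Pi_pmf (h ` A) d p)))"
    unfolding map_pmf_comp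
    apply (rule map_pmf_cong[OF refl])
    using insert.prems insert.hyps by (auto simp: fun_eq_iff inj_on_def)
  also have "map_pmf (\<lambda>(y,f). f(h x:=y)) (pair_pmf (p (h x)) (Pi_pmf (h ` A) d p)) = Pi_pmf (h ` insert x A) d p"
    using Pi_pmf_insert[of "h ` A" "h x" d p] hx insert.hyps by simp
  finally show ?case by simp
qed

lemma Pi_pmf_Sigma_nest:
  fixes K :: "'a \<Rightarrow> 'b set" and d :: 'c
  assumes "finite A" "\<And>a. a \<in> A \<Longrightarrow> finite (K a)"
  shows "map_pmf (\<lambda>W a. if a \<in> A then (\<lambda>k. W (a,k)) else (\<lambda>_. d)) (Pi_pmf (Sigma A K) d (\<lambda>c. p (fst c) (snd c)))
       = Pi_pmf A (\<lambda>_. d) (\<lambda>a. Pi_pmf (K a) d (p a))"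
  using assms
proof (induction A rule: finite_induct)
  case empty
  then show ?case by simp
next
  case (insert a A)
  define X where "X = Pair a ` K a"
  define Y where "Y = Sigma A K"
  have finK: "finite (K a)" using insert by auto
  have finY: "finite Y" unfolding Y_def using insert by auto
  have finX: "finite X" unfolding X_def using finK by auto
  have XY: "Sigma (insert a A) K = X \<union> Y" unfolding X_def Y_def by auto
  have disj: "X \<inter> Y = {}" unfolding X_def Y_def using insert.hyps by auto
  define N where "N = (\<lambda>(W::'a\<times>'b\<Rightarrow>'c) a. if a \<in> A then (\<lambda>k. W (a,k)) else (\<lambda>_. d))"
  define R where "R = (\<lambda>g k. if k \<in> K a then g (a, k) else d)"
  have IH: "map_pmf N (Pi_pmf Y d (\<lambda>c. p (fst c) (snd c))) = Pi_pmf A (\<lambda>_. d) (\<lambda>a. Pi_pmf (K a) d (p a))"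
    using insert unfolding N_def Y_def by auto
  have Ra: "map_pmf R (Pi_pmf X d (\<lambda>c. p (fst c) (snd c))) = Pi_pmf (K a) d (p a)"
    unfolding R_def X_def using Pi_pmf_reindex[OF finK, of "Pair a" d "\<lambda>c. p (fst c) (snd c)"]
    by (simp add: inj_on_def)
  have "Pi_pmf (insert a A) (\<lambda>_. d) (\<lambda>a. Pi_pmf (K a) d (p a)) =
     map_pmf (\<lambda>(y,f). f(a:=y)) (pair_pmf (Pi_pmf (K a) d (p a)) (Pi_pmf A (\<lambda>_. d) (\<lambda>a. Pi_pmf (K a) d (p a))))"
    by (rule Pi_pmf_insert) (use insert in auto)
  also have "\<dots> = map_pmf (\<lambda>(y,f). f(a:=y)) (pair_pmf (map_pmf R (Pi_pmf X d (\<lambda>c. p (fst c) (snd c))))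
       (map_pmf N (Pi_pmf Y d (\<lambda>c. p (fst c) (snd c)))))"
    by (simp add: IH Ra)
  also have "\<dots> = map_pmf (\<lambda>(u,w). (N w)(a := R u)) (pair_pmf (Pi_pmf X d (\<lambda>c. p (fst c) (snd c))) (Pi_pmf Y d (\<lambda>c. p (fst c) (snd c))))"
    by (simp add: map_pair[symmetric] map_pmf_comp case_prod_unfold)
  also have "\<dots> = map_pmf (\<lambda>W a'. if a' \<in> insert a A then (\<lambda>k. W (a',k)) else (\<lambda>_. d))
     (map_pmf (\<lambda>(f,g) x. if x \<in> X then f x else g x) (pair_pmf (Pi_pmf X d (\<lambda>c. p (fst c) (snd c))) (Pi_pmf Y d (\<lambda>c. p (fst c) (snd c)))))"
    unfolding map_pmf_comp
    apply (rule map_pmf_cong[OF refl])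
    subgoal for z
      apply (cases z)
      using set_Pi_pmf_subset[OF finX, of d "\<lambda>c. p (fst c) (snd c)"]
            set_Pi_pmf_subset[OF finY, of d "\<lambda>c. p (fst c) (snd c)"] insert.hyps
      by (auto simp: fun_eq_iff N_def R_def X_def Y_def)
    done
  also have "map_pmf (\<lambda>(f,g) x. if x \<in> X then f x else g x) (pair_pmf (Pi_pmf X d (\<lambda>c. p (fst c) (snd c))) (Pi_pmf Y d (\<lambda>c. p (fst c) (snd c))))
     = Pi_pmf (Sigma (insert a A) K) d (\<lambda>c. p (fst c) (snd c))"
    unfolding XY by (rule Pi_pmf_union[symmetric, OF finX finY disj])
  finally show ?case ..
qed

definition cq :: "('x \<Rightarrow> 'y pmf) \<Rightarrow> (nat \<Rightarrow> nat) \<Rightarrow> nat \<Rightarrow> 'x \<Rightarrow> ('x \<times> 'y) pmf" where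
  "cq pYX S j x = (if 1 \<le> S j then map_pmf (\<lambda>y. (x,y)) (pYX x) else return_pmf (x, hd []))"

lemma finite_T: "finite {(i, j, k). i < (B::nat) \<and> j < (n::nat) \<and> k < (S::nat\<Rightarrow>nat) j}"
proof (rule finite_subset)
  show "{(i, j, k). i < B \<and> j < n \<and> k < S j} \<subseteq> {..<B} \<times> (SIGMA j:{..<n}. {..<S j})" by auto
qed auto

lemma noisy_cells:
  fixes G1 :: "nat \<times> nat \<Rightarrow> 'x" and pYX :: "'x \<Rightarrow> 'y pmf"
  shows "map_pmf (\<lambda>G2 c. if c \<in> {..<B}\<times>{..<n} then (G1 c, hd (G2 c)) else undefined) (noisy_G2 pYX B n G1 S)
     = Pi_pmf ({..<B}\<times>{..<n}) undefined (\<lambda>c. cq pYX S (snd c) (G1 c))"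
proof -
  define A where "A = {..<B}\<times>{..<n}"
  define A1 where "A1 = {c\<in>A. 1 \<le> S (snd c)}"
  define T where "T = {(i, j, k). i < B \<and> j < n \<and> k < S j}"
  define p where "p = (\<lambda>(i, j, k::nat). pYX (G1 (i, j)))"
  define h where "h = (\<lambda>c::nat\<times>nat. (fst c, snd c, 0::nat))"
  define qq where "qq = (\<lambda>c. if 1 \<le> S (snd c) then pYX (G1 c) else return_pmf (hd []))"
  have finA: "finite A" unfolding A_def by auto
  have finA1: "finite A1" unfolding A1_def using finA by auto
  have finT: "finite T" unfolding T_def by (rule finite_T)
  have injh: "inj_on h A1" unfolding h_def inj_on_def by auto
  have sub: "h ` A1 \<subseteq> T" unfolding h_def A1_def A_def T_def by auto
  have "Pi_pmf A undefined (\<lambda>c. cq pYX S (snd c) (G1 c)) = Pi_pmf A undefined (\<lambda>c. map_pmf (\<lambda>y. (G1 c, y)) (qq c))"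
    by (rule Pi_pmf_cong) (auto simp: cq_def qq_def)
  also have "\<dots> = map_pmf (\<lambda>Y c. if c \<in> A then (G1 c, Y c) else undefined) (Pi_pmf A (hd []) qq)"
    by (rule Pi_pmf_map_idx[OF finA])
  also have "Pi_pmf A (hd []) qq = Pi_pmf A1 (hd []) (\<lambda>c. pYX (G1 c))"
    unfolding qq_def A1_def by (rule Pi_pmf_if_set[OF finA])
  also have "\<dots> = map_pmf (\<lambda>g c. if c \<in> A1 then g (h c) else hd []) (Pi_pmf (h ` A1) (hd []) p)"
    using Pi_pmf_reindex[OF finA1 injh, of "hd []" p] by (simp add: p_def h_def case_prod_beta)
  also have "Pi_pmf (h ` A1) (hd []) p = map_pmf (\<lambda>f x. if x \<in> h ` A1 then f x else hd []) (Pi_pmf (h ` A1) undefined p)"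
    by (rule Pi_pmf_default_swap[symmetric]) (use finA1 in auto)
  also have "Pi_pmf (h ` A1) undefined p = map_pmf (\<lambda>f x. if x \<in> h ` A1 then f x else undefined) (Pi_pmf T undefined p)"
    by (rule Pi_pmf_subset[OF finT sub])
  also have "map_pmf (\<lambda>Y c. if c \<in> A then (G1 c, Y c) else undefined)
     (map_pmf (\<lambda>g c. if c \<in> A1 then g (h c) else hd [])
       (map_pmf (\<lambda>f x. if x \<in> h ` A1 then f x else hd [])
         (map_pmf (\<lambda>f x. if x \<in> h ` A1 then f x else undefined) (Pi_pmf T undefined p)))) =
     map_pmf (\<lambda>W c. if c \<in> A then (G1 c, if c \<in> A1 then W (h c) else hd []) else undefined) (Pi_pmf T undefined p)"
    unfolding map_pmf_comp by (rule map_pmf_cong[OF refl]) (auto simp: fun_eq_iff)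
  finally have R: "Pi_pmf A undefined (\<lambda>c. cq pYX S (snd c) (G1 c)) =
      map_pmf (\<lambda>W c. if c \<in> A then (G1 c, if c \<in> A1 then W (h c) else hd []) else undefined) (Pi_pmf T undefined p)" .
  have L: "map_pmf (\<lambda>G2 c. if c \<in> A then (G1 c, hd (G2 c)) else undefined) (noisy_G2 pYX B n G1 S) =
      map_pmf (\<lambda>W c. if c \<in> A then (G1 c, if c \<in> A1 then W (h c) else hd []) else undefined) (Pi_pmf T undefined p)"
    unfolding noisy_G2_def map_pmf_comp T_def[symmetric] p_def[symmetric]
    apply (rule map_pmf_cong[OF refl])
    by (auto simp: fun_eq_iff A1_def h_def A_def hd_map upt_conv_Cons)
  show ?thesis using L R unfolding A_def by simp
qed

definition cellp :: "'x pmf \<Rightarrow> ('x \<Rightarrow> 'y pmf) \<Rightarrow> (nat \<Rightarrow> nat) \<Rightarrow> nat \<Rightarrow> ('x \<times> 'y) pmf" where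
  "cellp pX pYX S j = (if 1 \<le> S j then joint_pmf pX pYX else map_pmf (\<lambda>x. (x, hd [])) pX)"

definition rowp :: "'x pmf \<Rightarrow> ('x \<Rightarrow> 'y pmf) \<Rightarrow> (nat \<Rightarrow> nat) \<Rightarrow> nat \<Rightarrow> (nat \<Rightarrow> 'x \<times> 'y) pmf" where
  "rowp pX pYX S n = Pi_pmf {..<n} undefined (cellp pX pYX S)"

definition Rpmf :: "'x pmf \<Rightarrow> ('x \<Rightarrow> 'y pmf) \<Rightarrow> (nat \<Rightarrow> nat) \<Rightarrow> nat \<Rightarrow> nat \<Rightarrow> (nat \<Rightarrow> nat \<Rightarrow> 'x \<times> 'y) pmf" where
  "Rpmf pX pYX S B n = Pi_pmf {..<B} (\<lambda>_. undefined) (\<lambda>_. rowp pX pYX S n)"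

definition Psi :: "nat \<Rightarrow> nat \<Rightarrow> (nat \<times> nat \<Rightarrow> 'x) \<Rightarrow> (nat \<times> nat \<Rightarrow> 'y list) \<Rightarrow> nat \<Rightarrow> nat \<Rightarrow> 'x \<times> 'y" where
  "Psi B n G1 G2 = (\<lambda>i. if i \<in> {..<B} then (\<lambda>k. if (i,k) \<in> {..<B}\<times>{..<n} then (G1 (i,k), hd (G2 (i,k))) else undefined) else (\<lambda>_. undefined))"

definition condS :: "'x pmf \<Rightarrow> ('x \<Rightarrow> 'y pmf) \<Rightarrow> nat \<Rightarrow> nat \<Rightarrow> (nat \<Rightarrow> nat) \<Rightarrow> ((nat \<times> nat \<Rightarrow> 'x) \<times> (nat \<times> nat \<Rightarrow> 'y list)) pmf" where
  "condS pX pYX B n S = bind_pmf (seed_G1 pX B n) (\<lambda>G1. map_pmf (\<lambda>G2. (G1, G2)) (noisy_G2 pYX B n G1 S))"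

lemma cellp_bind: "cellp pX pYX S j = bind_pmf pX (cq pYX S j)"
proof (cases "1 \<le> S j")
  case True
  then show ?thesis unfolding cellp_def cq_def joint_pmf_def by simp
next
  case False
  then show ?thesis unfolding cellp_def cq_def joint_pmf_def map_pmf_def by simp
qed

lemma condS_Psi: "map_pmf (\<lambda>(G1,G2). Psi B n G1 G2) (condS pX pYX B n S) = Rpmf pX pYX S B n"
proof -
  define A where "A = {..<B}\<times>{..<n}"
  have finA: "finite A" unfolding A_def by auto
  define nest :: "(nat \<times> nat \<Rightarrow> 'a \<times> 'b) \<Rightarrow> nat \<Rightarrow> nat \<Rightarrow> 'a \<times> 'b"
    where "nest = (\<lambda>W a. if a \<in> {..<B} then (\<lambda>k. W (a,k)) else (\<lambda>_. undefined))"
  have "Rpmf pX pYX S B n = map_pmf nest (Pi_pmf A undefined (\<lambda>c. cellp pX pYX S (snd c)))"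
    unfolding Rpmf_def rowp_def nest_def A_def
    by (rule Pi_pmf_Sigma_nest[symmetric, where p = "\<lambda>i j. cellp pX pYX S j"]) auto
  also have "Pi_pmf A undefined (\<lambda>c. cellp pX pYX S (snd c)) =
      Pi_pmf A undefined (\<lambda>c. bind_pmf pX (cq pYX S (snd c)))"
    by (simp add: cellp_bind)
  also have "\<dots> = bind_pmf (Pi_pmf A undefined (\<lambda>_. pX)) (\<lambda>G1. Pi_pmf A undefined (\<lambda>c. cq pYX S (snd c) (G1 c)))"
    by (rule Pi_pmf_bind[OF finA])
  also have "\<dots> = bind_pmf (seed_G1 pX B n) (\<lambda>G1. map_pmf (\<lambda>G2 c. if c \<in> A then (G1 c, hd (G2 c)) else undefined) (noisy_G2 pYX B n G1 S))"
    unfolding seed_G1_def A_def noisy_cells ..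
  finally show ?thesis
    unfolding condS_def map_bind_pmf map_pmf_comp
    by (simp add: map_pmf_comp Psi_def nest_def A_def)
qed

lemma expect_of_bool: "measure_pmf.expectation p (\<lambda>x. of_bool (P x) :: real) = measure_pmf.prob p {x. P x}"
proof -
  have "(\<lambda>x. of_bool (P x) :: real) = indicator {x. P x}" by (auto simp: fun_eq_iff indicator_def)
  then show ?thesis by (simp add: integral_indicator)
qed

lemma prob_not: "measure_pmf.prob p {x. \<not> P x} = 1 - measure_pmf.prob p {x. P x}"
proof -
  have "measure_pmf.prob p (space (measure_pmf p) - {x. P x}) = 1 - measure_pmf.prob p {x. P x}"
    by (rule measure_pmf.prob_compl) simp
  moreover have "space (measure_pmf p) - {x. P x} = {x. \<not> P x}" by auto
  ultimately show ?thesis by simp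
qed

lemma Pi_pmf_pair2:
  assumes "finite A" "a \<in> A" "b \<in> A" "a \<noteq> b"
  shows "map_pmf (\<lambda>r. (r a, r b)) (Pi_pmf A d p) = pair_pmf (p a) (p b)"
proof -
  have sub: "{a, b} \<subseteq> A" using assms by auto
  have "map_pmf (\<lambda>r. (r a, r b)) (Pi_pmf A d p) = map_pmf (\<lambda>r. (r a, r b)) (Pi_pmf {a,b} d p)"
    by (simp add: Pi_pmf_subset[OF assms(1) sub] map_pmf_comp)
  also have "Pi_pmf {a,b} d p = map_pmf (\<lambda>(y,f). f(a:=y)) (pair_pmf (p a) (Pi_pmf {b} d p))"
    using Pi_pmf_insert[of "{b}" a d p] assms by simp
  also have "Pi_pmf {b} d p = map_pmf (\<lambda>v z. if z = b then v else d) (p b)"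
    by (rule Pi_pmf_singleton)
  finally show ?thesis using assms
    by (simp add: map_pmf_comp pair_map_pmf2 case_prod_unfold apsnd_def map_prod_def)
qed

definition delta :: "'x pmf \<Rightarrow> ('x \<Rightarrow> 'x pmf) \<Rightarrow> ('x \<Rightarrow> 'x) \<Rightarrow> real" where
  "delta pX pYX \<sigma> = measure_pmf.prob (joint_pmf pX pYX) {(x, y). \<sigma> y = x}
          - measure_pmf.prob (pair_pmf (joint_pmf pX pYX) pX) {((x1, y1), x2). \<sigma> y1 = x2}"

definition zrow :: "('x \<Rightarrow> 'x) \<Rightarrow> nat list \<Rightarrow> nat list \<Rightarrow> (nat \<Rightarrow> 'x \<times> 'x) \<Rightarrow> real" where
  "zrow \<sigma> g rs r = (\<Sum>t<length rs. of_bool (fst (r (g!t)) \<noteq> \<sigma> (snd (r (rs!t))))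
                                  - of_bool (fst (r (rs!t)) \<noteq> \<sigma> (snd (r (rs!t)))))"

lemma map_fst_joint: "map_pmf fst (joint_pmf pX pYX) = pX"
  by (simp add: joint_pmf_def map_bind_pmf map_pmf_comp bind_return_pmf' flip: map_pmf_def)

lemma map_fst_cellp: "map_pmf fst (cellp pX pYX S j) = pX"
  by (auto simp: cellp_def map_fst_joint map_pmf_comp)

lemma rowp_comp: "a < n \<Longrightarrow> map_pmf (\<lambda>r. r a) (rowp pX pYX S n) = cellp pX pYX S a"
  unfolding rowp_def by (subst Pi_pmf_component) auto

lemma rowp_pair: "a < n \<Longrightarrow> b < n \<Longrightarrow> a \<noteq> b \<Longrightarrow>
   map_pmf (\<lambda>r. (r a, r b)) (rowp pX pYX S n) = pair_pmf (cellp pX pYX S a) (cellp pX pYX S b)"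
  unfolding rowp_def by (rule Pi_pmf_pair2) auto

lemma term_bounded: "integrable (measure_pmf p) (\<lambda>x. of_bool (P x) :: real)"
  by (rule measure_pmf.integrable_const_bound[where B=1]) auto

lemma expect_aligned:
  assumes "a < n" "1 \<le> S a"
  shows "measure_pmf.expectation (rowp pX pYX S n) (\<lambda>r. of_bool (fst (r a) \<noteq> \<sigma> (snd (r a))) :: real)
     = 1 - measure_pmf.prob (joint_pmf pX pYX) {(x, y). \<sigma> y = x}"
proof -
  have "measure_pmf.expectation (rowp pX pYX S n) (\<lambda>r. of_bool (fst (r a) \<noteq> \<sigma> (snd (r a))) :: real)
      = measure_pmf.expectation (map_pmf (\<lambda>r. r a) (rowp pX pYX S n)) (\<lambda>u. of_bool (fst u \<noteq> \<sigma> (snd u)))"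
    by (simp add: integral_map_pmf)
  also have "\<dots> = measure_pmf.prob (joint_pmf pX pYX) {u. \<not> fst u = \<sigma> (snd u)}"
    using assms by (simp add: rowp_comp cellp_def expect_of_bool)
  also have "\<dots> = 1 - measure_pmf.prob (joint_pmf pX pYX) {u. fst u = \<sigma> (snd u)}"
    by (rule prob_not)
  also have "{u. fst u = \<sigma> (snd u)} = {(x, y). \<sigma> y = x}" by auto
  finally show ?thesis .
qed

lemma expect_misaligned:
  assumes "a < n" "1 \<le> S a" "b < n" "a \<noteq> b"
  shows "measure_pmf.expectation (rowp pX pYX S n) (\<lambda>r. of_bool (fst (r b) \<noteq> \<sigma> (snd (r a))) :: real)
     = 1 - measure_pmf.prob (pair_pmf (joint_pmf pX pYX) pX) {((x1, y1), x2). \<sigma> y1 = x2}"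
proof -
  have "measure_pmf.expectation (rowp pX pYX S n) (\<lambda>r. of_bool (fst (r b) \<noteq> \<sigma> (snd (r a))) :: real)
      = measure_pmf.expectation (map_pmf (\<lambda>r. (r a, r b)) (rowp pX pYX S n)) (\<lambda>w. of_bool (fst (snd w) \<noteq> \<sigma> (snd (fst w))))"
    by (simp add: integral_map_pmf)
  also have "map_pmf (\<lambda>r. (r a, r b)) (rowp pX pYX S n) = pair_pmf (joint_pmf pX pYX) (cellp pX pYX S b)"
    using assms by (simp add: rowp_pair cellp_def)
  also have "measure_pmf.expectation (pair_pmf (joint_pmf pX pYX) (cellp pX pYX S b)) (\<lambda>w. of_bool (fst (snd w) \<noteq> \<sigma> (snd (fst w))) :: real)
     = measure_pmf.expectation (map_pmf (apsnd fst) (pair_pmf (joint_pmf pX pYX) (cellp pX pYX S b))) (\<lambda>w. of_bool (snd w \<noteq> \<sigma> (snd (fst w))))"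
    by (simp add: integral_map_pmf)
  also have "map_pmf (apsnd fst) (pair_pmf (joint_pmf pX pYX) (cellp pX pYX S b)) = pair_pmf (joint_pmf pX pYX) pX"
    by (simp add: pair_map_pmf2[symmetric] map_fst_cellp)
  also have "measure_pmf.expectation (pair_pmf (joint_pmf pX pYX) pX) (\<lambda>w. of_bool (snd w \<noteq> \<sigma> (snd (fst w))) :: real)
     = measure_pmf.prob (pair_pmf (joint_pmf pX pYX) pX) {w. \<not> snd w = \<sigma> (snd (fst w))}"
    by (rule expect_of_bool)
  also have "\<dots> = 1 - measure_pmf.prob (pair_pmf (joint_pmf pX pYX) pX) {w. snd w = \<sigma> (snd (fst w))}"
    by (rule prob_not)
  also have "{w. snd w = \<sigma> (snd (fst w))} = {((x1, y1), x2). \<sigma> y1 = x2}" by auto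
  finally show ?thesis .
qed

lemma zrow_expect:
  assumes "\<And>t. t < length rs \<Longrightarrow> g!t < n \<and> rs!t < n \<and> 1 \<le> S (rs!t)"
  shows "measure_pmf.expectation (rowp pX pYX S n) (zrow \<sigma> g rs)
     = real (card {t. t < length rs \<and> g!t \<noteq> rs!t}) * delta pX pYX \<sigma>"
proof -
  have "measure_pmf.expectation (rowp pX pYX S n) (zrow \<sigma> g rs) =
      (\<Sum>t<length rs. measure_pmf.expectation (rowp pX pYX S n) (\<lambda>r. of_bool (fst (r (g!t)) \<noteq> \<sigma> (snd (r (rs!t)))) :: real)
         - measure_pmf.expectation (rowp pX pYX S n) (\<lambda>r. of_bool (fst (r (rs!t)) \<noteq> \<sigma> (snd (r (rs!t)))) :: real))"
    unfolding zrow_def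
    by (subst Bochner_Integration.integral_sum) (auto intro!: term_bounded Bochner_Integration.integral_diff sum.cong)
  also have "\<dots> = (\<Sum>t<length rs. if g!t \<noteq> rs!t then delta pX pYX \<sigma> else 0)"
  proof (rule sum.cong[OF refl])
    fix t assume t: "t \<in> {..<length rs}"
    show "measure_pmf.expectation (rowp pX pYX S n) (\<lambda>r. of_bool (fst (r (g!t)) \<noteq> \<sigma> (snd (r (rs!t)))) :: real)
         - measure_pmf.expectation (rowp pX pYX S n) (\<lambda>r. of_bool (fst (r (rs!t)) \<noteq> \<sigma> (snd (r (rs!t)))) :: real)
       = (if g!t \<noteq> rs!t then delta pX pYX \<sigma> else 0)"
      using assms[of t] t expect_aligned[of "rs!t" n S pX pYX \<sigma>] expect_misaligned[of "rs!t" n S "g!t" pX pYX \<sigma>]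
      by (auto simp: delta_def)
  qed
  also have "\<dots> = real (card {t. t < length rs \<and> g!t \<noteq> rs!t}) * delta pX pYX \<sigma>"
    by (simp add: sum.If_cases Int_def conj_commute)
  finally show ?thesis .
qed

lemma zrow_abs: "\<bar>zrow \<sigma> g rs r\<bar> \<le> real (card {t. t < length rs \<and> g!t \<noteq> rs!t})"
proof -
  have "\<bar>zrow \<sigma> g rs r\<bar> \<le> (\<Sum>t<length rs. \<bar>of_bool (fst (r (g!t)) \<noteq> \<sigma> (snd (r (rs!t))))
                                  - of_bool (fst (r (rs!t)) \<noteq> \<sigma> (snd (r (rs!t)))) :: real\<bar>)"
    unfolding zrow_def by (rule sum_abs)
  also have "\<dots> \<le> (\<Sum>t<length rs. if g!t \<noteq> rs!t then 1 else 0)"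
    by (rule sum_mono) auto
  also have "\<dots> = real (card {t. t < length rs \<and> g!t \<noteq> rs!t})"
    by (simp add: sum.If_cases Int_def conj_commute)
  finally show ?thesis .
qed

lemma row_mgf:
  assumes idx: "\<And>t. t < length rs \<Longrightarrow> g!t < n \<and> rs!t < n \<and> 1 \<le> S (rs!t)"
    and m: "m = card {t. t < length rs \<and> g!t \<noteq> rs!t}" "m \<ge> 1"
    and dpos: "delta pX pYX \<sigma> > 0"
  shows "nn_integral (rowp pX pYX S n) (\<lambda>r. ennreal (exp (- (delta pX pYX \<sigma> / m) * zrow \<sigma> g rs r)))
          \<le> ennreal (exp (- (delta pX pYX \<sigma>)\<^sup>2 / 2))"
proof -
  define P where "P = rowp pX pYX S n"
  define \<delta> where "\<delta> = delta pX pYX \<sigma>"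
  define l where "l = \<delta> / m"
  have mpos: "real m > 0" using m by auto
  have lpos: "l > 0" unfolding l_def \<delta>_def using dpos mpos by auto
  interpret H: interval_bounded_random_variable "measure_pmf P" "\<lambda>r. - zrow \<sigma> g rs r" "- real m" "real m"
  proof unfold_locales
    show "AE x in measure_pmf P. - zrow \<sigma> g rs x \<in> {- real m..real m}"
      using zrow_abs[of \<sigma> g rs] m by (auto simp: abs_le_iff)
  qed simp
  have E: "measure_pmf.expectation P (\<lambda>r. - zrow \<sigma> g rs r) = - (real m * \<delta>)"
    unfolding P_def \<delta>_def using zrow_expect[OF idx, of pX pYX \<sigma>] m by simp
  have "nn_integral P (\<lambda>x. exp (l * (- zrow \<sigma> g rs x - measure_pmf.expectation P (\<lambda>r. - zrow \<sigma> g rs r))))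
      \<le> ennreal (exp (l\<^sup>2 * (real m - - real m)\<^sup>2 / 8))"
    by (rule H.Hoeffdings_lemma_nn_integral[OF lpos])
  also have "l\<^sup>2 * (real m - - real m)\<^sup>2 / 8 = \<delta>\<^sup>2 / 2"
    unfolding l_def using mpos by (simp add: field_simps power2_eq_square)
  also have "(\<lambda>x. exp (l * (- zrow \<sigma> g rs x - measure_pmf.expectation P (\<lambda>r. - zrow \<sigma> g rs r))))
     = (\<lambda>x. exp (- l * zrow \<sigma> g rs x) * exp (\<delta>\<^sup>2))"
    unfolding E l_def using mpos by (auto simp: fun_eq_iff field_simps power2_eq_square simp flip: exp_add)
  finally have 1: "nn_integral P (\<lambda>x. ennreal (exp (- l * zrow \<sigma> g rs x)) * ennreal (exp (\<delta>\<^sup>2))) \<le> ennreal (exp (\<delta>\<^sup>2 / 2))"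
    by (simp add: ennreal_mult)
  have 2: "nn_integral P (\<lambda>x. ennreal (exp (- l * zrow \<sigma> g rs x)) * ennreal (exp (\<delta>\<^sup>2))) =
        nn_integral P (\<lambda>x. ennreal (exp (- l * zrow \<sigma> g rs x))) * ennreal (exp (\<delta>\<^sup>2))"
    by (rule nn_integral_multc) simp
  define N where "N = nn_integral P (\<lambda>x. ennreal (exp (- l * zrow \<sigma> g rs x)))"
  have "N = N * ennreal (exp (\<delta>\<^sup>2)) * ennreal (exp (- \<delta>\<^sup>2))"
    by (simp add: mult.assoc ennreal_mult[symmetric] flip: exp_add)
  also have "\<dots> \<le> ennreal (exp (\<delta>\<^sup>2 / 2)) * ennreal (exp (- \<delta>\<^sup>2))"
    using 1 2 unfolding N_def by (intro mult_right_mono) auto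
  also have "\<dots> = ennreal (exp (- \<delta>\<^sup>2 / 2))"
    by (simp add: ennreal_mult[symmetric] flip: exp_add)
  finally show ?thesis unfolding N_def P_def l_def \<delta>_def by simp
qed

lemma R_bound:
  assumes idx: "\<And>t. t < length rs \<Longrightarrow> g!t < n \<and> rs!t < n \<and> 1 \<le> S (rs!t)"
    and m: "m = card {t. t < length rs \<and> g!t \<noteq> rs!t}" "m \<ge> 1"
    and dpos: "delta pX pYX \<sigma> > 0"
  shows "measure_pmf.prob (Rpmf pX pYX S B n) {F. (\<Sum>i<B. zrow \<sigma> g rs (F i)) \<le> 0}
          \<le> exp (- (delta pX pYX \<sigma>)\<^sup>2 / 2) ^ B"
proof -
  define l where "l = delta pX pYX \<sigma> / m"
  have lpos: "l > 0" unfolding l_def using dpos m by auto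
  define E where "E = {F. (\<Sum>i<B. zrow \<sigma> g rs (F i)) \<le> 0}"
  define f where "f = (\<lambda>r. ennreal (exp (- l * zrow \<sigma> g rs r)))"
  have "emeasure (measure_pmf (Rpmf pX pYX S B n)) E = nn_integral (Rpmf pX pYX S B n) (indicator E)"
    by simp
  also have "\<dots> \<le> nn_integral (Rpmf pX pYX S B n) (\<lambda>F. \<Prod>i\<in>{..<B}. f (F i))"
  proof (rule nn_integral_mono)
    fix F
    have eq: "(\<Prod>i\<in>{..<B}. f (F i)) = ennreal (exp (- l * (\<Sum>i<B. zrow \<sigma> g rs (F i))))"
      unfolding f_def by (simp add: prod_ennreal exp_sum sum_distrib_left flip: sum_negf)
    show "indicator E F \<le> (\<Prod>i\<in>{..<B}. f (F i))"
    proof (cases "F \<in> E")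
      case True
      then have "- l * (\<Sum>i<B. zrow \<sigma> g rs (F i)) \<ge> 0" using lpos unfolding E_def
        by (simp add: mult_nonneg_nonpos)
      then have "1 \<le> exp (- l * (\<Sum>i<B. zrow \<sigma> g rs (F i)))" by simp
      then show ?thesis using True eq by simp
    qed simp
  qed
  also have "\<dots> = (\<Prod>i\<in>{..<B}. nn_integral (rowp pX pYX S n) f)"
    unfolding Rpmf_def by (rule nn_integral_prod_Pi_pmf) simp
  also have "\<dots> \<le> (\<Prod>i\<in>{..<B}. ennreal (exp (- (delta pX pYX \<sigma>)\<^sup>2 / 2)))"
    unfolding prod_constant
    apply (rule power_mono)
    using row_mgf[OF idx m dpos] unfolding f_def l_def by auto
  also have "\<dots> = ennreal (exp (- (delta pX pYX \<sigma>)\<^sup>2 / 2) ^ B)"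
    by (simp add: prod_ennreal ennreal_power)
  finally have "ennreal (measure_pmf.prob (Rpmf pX pYX S B n) E) \<le> ennreal (exp (- (delta pX pYX \<sigma>)\<^sup>2 / 2) ^ B)"
    by (simp add: measure_pmf.emeasure_eq_measure)
  then show ?thesis unfolding E_def by (simp add: ennreal_le_iff)
qed

definition nI :: "nat \<Rightarrow> nat set \<Rightarrow> nat list" where
  "nI n I = filter (\<lambda>j. j \<notin> I) [0..<n]"

lemma nI_del: "nI n (I_del S n) = retained_cols S n"
  unfolding nI_def retained_cols_def I_del_def by (rule filter_cong) auto

lemma set_nI: "set (nI n I) = {j. j < n \<and> j \<notin> I}"
  unfolding nI_def by auto

lemma set_ret: "set (retained_cols S n) = {j. j < n \<and> 1 \<le> S j}"
  unfolding retained_cols_def by auto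

lemma length_nI:
  assumes "I \<subseteq> {..<n}" "card I = n - Ktilde S n"
  shows "length (nI n I) = Ktilde S n"
proof -
  have K: "Ktilde S n \<le> n" unfolding Ktilde_def retained_cols_def
    using length_filter_le[of _ "[0..<n]"] by simp
  have "length (nI n I) = card (set (nI n I))"
    by (rule distinct_card[symmetric]) (simp add: nI_def)
  also have "set (nI n I) = {..<n} - I" by (auto simp: set_nI)
  also have "card ({..<n} - I) = n - card I"
    using assms(1) by (simp add: card_Diff_subset finite_subset)
  finally show ?thesis using assms K by simp
qed

lemma m_pos:
  assumes "I \<subseteq> {..<n}" "card I = n - Ktilde S n" "I \<noteq> I_del S n"
  shows "card {t. t < length (retained_cols S n) \<and> nI n I ! t \<noteq> retained_cols S n ! t} \<ge> 1"
proof (rule ccontr)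
  assume "\<not> ?thesis"
  then have 0: "card {t. t < length (retained_cols S n) \<and> nI n I ! t \<noteq> retained_cols S n ! t} = 0" by linarith
  have fin: "finite {t. t < length (retained_cols S n) \<and> nI n I ! t \<noteq> retained_cols S n ! t}" by auto
  have eqn: "\<And>t. t < length (retained_cols S n) \<Longrightarrow> nI n I ! t = retained_cols S n ! t"
  proof -
    fix t assume t: "t < length (retained_cols S n)"
    show "nI n I ! t = retained_cols S n ! t"
    proof (rule ccontr)
    assume "nI n I ! t \<noteq> retained_cols S n ! t"
    with t have "t \<in> {t. t < length (retained_cols S n) \<and> nI n I ! t \<noteq> retained_cols S n ! t}" by simp
    then have "card {t. t < length (retained_cols S n) \<and> nI n I ! t \<noteq> retained_cols S n ! t} > 0"
      using fin card_gt_0_iff by blast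
    then show False using 0 by linarith
  qed
  qed
  have len: "length (nI n I) = length (retained_cols S n)"
    using length_nI[OF assms(1,2)] unfolding Ktilde_def by simp
  have "nI n I = retained_cols S n" using len eqn by (intro nth_equalityI) auto
  then have "set (nI n I) = set (nI n (I_del S n))" by (simp add: nI_del)
  then have "{j. j < n \<and> j \<notin> I} = {j. j < n \<and> j \<notin> I_del S n}" by (simp add: set_nI)
  then have "I = I_del S n" using assms(1) unfolding I_del_def by blast
  with assms(3) show False by simp
qed

lemma D_diff:
  assumes "\<And>t. t < Ktilde S n \<Longrightarrow> nI n I ! t < n"
  shows "real (hamming_dist B (Ktilde S n) (G1tilde G1 n I) (\<sigma> \<circ> G2tilde G2 S n))
       - real (hamming_dist B (Ktilde S n) (G1tilde G1 n (I_del S n)) (\<sigma> \<circ> G2tilde G2 S n))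
       = (\<Sum>i<B. zrow \<sigma> (nI n I) (retained_cols S n) (Psi B n G1 G2 i))"
proof -
  have rt: "\<And>t. t < Ktilde S n \<Longrightarrow> retained_cols S n ! t < n"
  proof -
    fix t assume "t < Ktilde S n"
    then have "retained_cols S n ! t \<in> set (retained_cols S n)" unfolding Ktilde_def by (rule nth_mem)
    then show "retained_cols S n ! t < n" by (simp add: set_ret)
  qed
  have h: "\<And>I'. real (hamming_dist B (Ktilde S n) (G1tilde G1 n I') (\<sigma> \<circ> G2tilde G2 S n))
     = (\<Sum>i<B. \<Sum>t<Ktilde S n. (of_bool (G1 (i, nI n I' ! t) \<noteq> \<sigma> (hd (G2 (i, retained_cols S n ! t)))) :: real))"
    unfolding hamming_dist_def G1tilde_def G2tilde_def nI_def of_nat_sum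
    by (intro sum.cong refl) simp
  have "real (hamming_dist B (Ktilde S n) (G1tilde G1 n I) (\<sigma> \<circ> G2tilde G2 S n))
       - real (hamming_dist B (Ktilde S n) (G1tilde G1 n (I_del S n)) (\<sigma> \<circ> G2tilde G2 S n))
     = (\<Sum>i<B. \<Sum>t<Ktilde S n. (of_bool (G1 (i, nI n I ! t) \<noteq> \<sigma> (hd (G2 (i, retained_cols S n ! t)))) :: real)
          - of_bool (G1 (i, retained_cols S n ! t) \<noteq> \<sigma> (hd (G2 (i, retained_cols S n ! t)))))"
    unfolding h nI_del by (simp only: sum_subtractf)
  also have "\<dots> = (\<Sum>i<B. zrow \<sigma> (nI n I) (retained_cols S n) (Psi B n G1 G2 i))"
    unfolding zrow_def Ktilde_def[symmetric]
    apply (rule sum.cong[OF refl])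
    apply (rule sum.cong[OF refl])
    using assms rt by (simp add: Psi_def)
  finally show ?thesis .
qed

lemma condS_bound:
  fixes pX :: "'x pmf" and pYX :: "'x \<Rightarrow> 'x pmf"
  assumes dpos: "delta pX pYX \<sigma> > 0"
  shows "measure_pmf.prob (condS pX pYX B n S) {(G1, G2). \<not> deletion_detected \<sigma> B n G1 S G2}
     \<le> 2 ^ n * exp (- (delta pX pYX \<sigma>)\<^sup>2 / 2) ^ B"
proof -
  define bnd where "bnd = exp (- (delta pX pYX \<sigma>)\<^sup>2 / 2) ^ B"
  define II where "II = {I. I \<subseteq> {..<n} \<and> card I = n - Ktilde S n \<and> I \<noteq> I_del S n}"
  define rs where "rs = retained_cols S n"
  define E where "E = (\<lambda>I. {(G1, G2). (\<Sum>i<B. zrow \<sigma> (nI n I) rs (Psi B n G1 G2 i)) \<le> 0})"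
  have finII: "finite II" unfolding II_def by (rule finite_subset[of _ "Pow {..<n}"]) auto
  have cardII: "card II \<le> 2 ^ n"
  proof -
    have "card II \<le> card (Pow {..<n::nat})" unfolding II_def by (rule card_mono) auto
    then show ?thesis by (simp add: card_Pow)
  qed
  have idx: "\<And>I t. I \<in> II \<Longrightarrow> t < length rs \<Longrightarrow> nI n I ! t < n \<and> rs!t < n \<and> 1 \<le> S (rs!t)"
  proof -
    fix I t assume I: "I \<in> II" and t: "t < length rs"
    have len: "length (nI n I) = length rs"
      using length_nI[of I n S] I unfolding II_def rs_def Ktilde_def by auto
    have "nI n I ! t \<in> set (nI n I)" using t len by (intro nth_mem) simp
    moreover have "rs ! t \<in> set rs" using t by (rule nth_mem)
    ultimately show "nI n I ! t < n \<and> rs!t < n \<and> 1 \<le> S (rs!t)"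
      unfolding rs_def by (auto simp: set_nI set_ret)
  qed
  have sub: "{(G1, G2). \<not> deletion_detected \<sigma> B n G1 S G2} \<subseteq> (\<Union>I\<in>II. E I)"
  proof safe
    fix G1 G2 assume nd: "\<not> deletion_detected \<sigma> B n G1 S G2"
    then obtain I where I: "I \<subseteq> {..<n}" "card I = n - Ktilde S n" "I \<noteq> I_del S n"
      and le: "\<not> hamming_dist B (Ktilde S n) (G1tilde G1 n (I_del S n)) (\<sigma> \<circ> G2tilde G2 S n)
                < hamming_dist B (Ktilde S n) (G1tilde G1 n I) (\<sigma> \<circ> G2tilde G2 S n)"
      unfolding deletion_detected_def Let_def by blast
    have III: "I \<in> II" using I unfolding II_def by auto
    have nI_lt: "\<And>t. t < Ktilde S n \<Longrightarrow> nI n I ! t < n"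
      using idx[OF III] unfolding rs_def Ktilde_def by blast
    have dd: "real (hamming_dist B (Ktilde S n) (G1tilde G1 n I) (\<sigma> \<circ> G2tilde G2 S n))
       - real (hamming_dist B (Ktilde S n) (G1tilde G1 n (I_del S n)) (\<sigma> \<circ> G2tilde G2 S n))
       = (\<Sum>i<B. zrow \<sigma> (nI n I) (retained_cols S n) (Psi B n G1 G2 i))"
      by (rule D_diff) (rule nI_lt)
    from dd le
    have "(\<Sum>i<B. zrow \<sigma> (nI n I) rs (Psi B n G1 G2 i)) \<le> 0" unfolding rs_def by linarith
    then show "(G1, G2) \<in> (\<Union>I\<in>II. E I)" using III unfolding E_def by auto
  qed
  have EI: "measure_pmf.prob (condS pX pYX B n S) (E I) \<le> bnd" if I: "I \<in> II" for I
  proof -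
    have "measure_pmf.prob (condS pX pYX B n S) (E I) =
        measure_pmf.prob (map_pmf (\<lambda>(G1,G2). Psi B n G1 G2) (condS pX pYX B n S)) {F. (\<Sum>i<B. zrow \<sigma> (nI n I) rs (F i)) \<le> 0}"
    proof -
      have "(\<lambda>(G1,G2). Psi B n G1 G2) -` {F. (\<Sum>i<B. zrow \<sigma> (nI n I) rs (F i)) \<le> 0} = E I"
      proof (rule set_eqI)
        fix x :: "(nat \<times> nat \<Rightarrow> 'x) \<times> (nat \<times> nat \<Rightarrow> 'x list)"
        obtain a b where x: "x = (a, b)" by (cases x)
        show "x \<in> (\<lambda>(G1,G2). Psi B n G1 G2) -` {F. (\<Sum>i<B. zrow \<sigma> (nI n I) rs (F i)) \<le> 0} \<longleftrightarrow> x \<in> E I"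
          unfolding x E_def vimage_def mem_Collect_eq prod.case ..
      qed
      then show ?thesis by (simp only: measure_map_pmf)
    qed
    also have "\<dots> = measure_pmf.prob (Rpmf pX pYX S B n) {F. (\<Sum>i<B. zrow \<sigma> (nI n I) rs (F i)) \<le> 0}"
      by (simp add: condS_Psi)
    also have "\<dots> \<le> bnd" unfolding bnd_def
      by (rule R_bound[OF idx[OF I] refl _ dpos]) (use m_pos[of I n S] I in \<open>auto simp: II_def rs_def\<close>)
    finally show ?thesis .
  qed
  have "measure_pmf.prob (condS pX pYX B n S) {(G1, G2). \<not> deletion_detected \<sigma> B n G1 S G2}
      \<le> measure_pmf.prob (condS pX pYX B n S) (\<Union>I\<in>II. E I)"
    by (rule measure_pmf.finite_measure_mono[OF sub]) simp
  also have "\<dots> \<le> (\<Sum>I\<in>II. measure_pmf.prob (condS pX pYX B n S) (E I))"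
    by (rule measure_pmf.finite_measure_subadditive_finite[OF finII]) auto
  also have "\<dots> \<le> (\<Sum>I\<in>II. bnd)" by (rule sum_mono) (rule EI)
  also have "\<dots> = real (card II) * bnd" by simp
  also have "\<dots> \<le> 2 ^ n * bnd"
  proof (rule mult_right_mono)
    have "real (card II) \<le> real (2 ^ n)" using cardII by (rule of_nat_mono)
    then show "real (card II) \<le> 2 ^ n" by simp
  qed (simp add: bnd_def)
  finally show ?thesis unfolding bnd_def .
qed

lemma seeded_as_bind:
  "seeded_experiment pX pYX pS B n =
     bind_pmf (rep_pattern pS n) (\<lambda>S. map_pmf (\<lambda>(G1, G2). (G1, S, G2)) (condS pX pYX B n S))"
  unfolding seeded_experiment_def condS_def
  by (subst bind_commute_pmf) (simp add: map_bind_pmf map_pmf_comp)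

lemma prob_bind_le:
  assumes "\<And>x. measure_pmf.prob (f x) A \<le> b"
  shows "measure_pmf.prob (bind_pmf p f) A \<le> b"
proof -
  have b0: "b \<ge> 0" using assms[of undefined] measure_nonneg[of "measure_pmf (f undefined)" A] by linarith
  have "emeasure (measure_pmf (bind_pmf p f)) A = (\<integral>\<^sup>+x. emeasure (measure_pmf (f x)) A \<partial>p)"
    by simp
  also have "\<dots> \<le> (\<integral>\<^sup>+x. ennreal b \<partial>p)"
    by (rule nn_integral_mono) (use assms in \<open>simp add: measure_pmf.emeasure_eq_measure ennreal_leI\<close>)
  also have "\<dots> = ennreal b" by (simp add: measure_pmf.emeasure_space_1)
  finally show ?thesis using b0 by (simp add: measure_pmf.emeasure_eq_measure)
qed

lemma part2:
  fixes pX :: "'x pmf" and pYX :: "'x \<Rightarrow> 'x pmf" and \<sigma> :: "'x \<Rightarrow> 'x"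
  assumes dpos: "delta pX pYX \<sigma> > 0"
  shows "\<exists>c::real. c > 0 \<and>
              (\<forall>(pS :: nat pmf) (smax :: nat) (B :: nat \<Rightarrow> nat).
                 set_pmf pS \<subseteq> {0..smax} \<and> (\<forall>n. real (B n) \<ge> c * real n) \<longrightarrow>
                 (\<lambda>n. measure_pmf.prob (seeded_experiment pX pYX pS (B n) n)
                        {(G1, S, G2). deletion_detected \<sigma> (B n) n G1 S G2})
                 \<longlonglongrightarrow> 1)"
proof (intro exI[of _ "4 / (delta pX pYX \<sigma>)\<^sup>2"] conjI allI impI)
  define \<delta> where "\<delta> = delta pX pYX \<sigma>"
  have d0: "\<delta> > 0" unfolding \<delta>_def by (rule dpos)
  show "4 / (delta pX pYX \<sigma>)\<^sup>2 > 0" using dpos by simp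
  fix pS :: "nat pmf" and smax :: nat and B :: "nat \<Rightarrow> nat"
  assume "set_pmf pS \<subseteq> {0..smax} \<and> (\<forall>n. real (B n) \<ge> 4 / (delta pX pYX \<sigma>)\<^sup>2 * real n)"
  then have Bge: "\<And>n. real (B n) \<ge> 4 / \<delta>\<^sup>2 * real n" unfolding \<delta>_def by auto
  define q :: real where "q = 2 * exp (-2)"
  have q0: "q \<ge> 0" unfolding q_def by simp
  have q1: "q < 1"
  proof -
    have "exp (2::real) \<ge> 1 + 2" by (rule exp_ge_add_one_self)
    then have "2 < exp (2::real)" by simp
    then show ?thesis unfolding q_def by (simp add: exp_minus field_simps)
  qed
  define P where "P = (\<lambda>n. measure_pmf.prob (seeded_experiment pX pYX pS (B n) n)
                        {(G1, S, G2). deletion_detected \<sigma> (B n) n G1 S G2})"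
  have low: "1 - q ^ n \<le> P n" for n
  proof -
    let ?M = "seeded_experiment pX pYX pS (B n) n"
    let ?Q = "\<lambda>w. case w of (G1, S, G2) \<Rightarrow> deletion_detected \<sigma> (B n) n G1 S G2"
    have bexp: "2 ^ n * exp (- \<delta>\<^sup>2 / 2) ^ B n \<le> q ^ n"
    proof -
      have "exp (- \<delta>\<^sup>2 / 2) ^ B n = exp (- (\<delta>\<^sup>2 / 2) * real (B n))"
        by (simp add: exp_of_nat_mult[symmetric] mult.commute)
      also have "\<dots> \<le> exp (- 2 * real n)"
      proof -
        have "\<delta>\<^sup>2 * (4 / \<delta>\<^sup>2 * real n) \<le> \<delta>\<^sup>2 * real (B n)"
          using Bge[of n] d0 by (intro mult_left_mono) auto
        then have "4 * real n \<le> \<delta>\<^sup>2 * real (B n)" using d0 by simp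
        then show ?thesis by simp
      qed
      also have "\<dots> = exp (-2) ^ n" by (simp add: exp_of_nat_mult[symmetric] mult.commute)
      finally have "exp (- \<delta>\<^sup>2 / 2) ^ B n \<le> exp (-2) ^ n" .
      then have "2 ^ n * exp (- \<delta>\<^sup>2 / 2) ^ B n \<le> 2 ^ n * exp (-2) ^ n" by simp
      also have "\<dots> = q ^ n" unfolding q_def by (simp add: power_mult_distrib)
      finally show ?thesis .
    qed
    have "measure_pmf.prob ?M {w. \<not> ?Q w} \<le> 2 ^ n * exp (- \<delta>\<^sup>2 / 2) ^ B n"
      unfolding seeded_as_bind
    proof (rule prob_bind_le)
      fix S
      have "measure_pmf.prob (map_pmf (\<lambda>(G1, G2). (G1, S, G2)) (condS pX pYX (B n) n S)) {w. \<not> ?Q w}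
          = measure_pmf.prob (condS pX pYX (B n) n S) {(G1, G2). \<not> deletion_detected \<sigma> (B n) n G1 S G2}"
        unfolding measure_map_pmf by (intro arg_cong[where f="measure_pmf.prob _"]) auto
      also have "\<dots> \<le> 2 ^ n * exp (- \<delta>\<^sup>2 / 2) ^ B n"
        unfolding \<delta>_def by (rule condS_bound[OF dpos])
      finally show "measure_pmf.prob (map_pmf (\<lambda>(G1, G2). (G1, S, G2)) (condS pX pYX (B n) n S)) {w. \<not> ?Q w}
          \<le> 2 ^ n * exp (- \<delta>\<^sup>2 / 2) ^ B n" .
    qed
    moreover have "measure_pmf.prob ?M {w. \<not> ?Q w} = 1 - measure_pmf.prob ?M {w. ?Q w}"
      by (rule prob_not)
    moreover have "{w. ?Q w} = {(G1, S, G2). deletion_detected \<sigma> (B n) n G1 S G2}" by auto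
    ultimately show ?thesis unfolding P_def using bexp by simp
  qed
  have up: "P n \<le> 1" for n unfolding P_def by simp
  have "(\<lambda>n. 1 - q ^ n) \<longlonglongrightarrow> 1 - 0"
    by (intro tendsto_diff tendsto_const LIMSEQ_power_zero) (use q0 q1 in auto)
  then have L1: "(\<lambda>n. 1 - q ^ n) \<longlonglongrightarrow> 1" by simp
  have e1: "\<forall>\<^sub>F n in sequentially. 1 - q ^ n \<le> P n" using low by simp
  have e2: "\<forall>\<^sub>F n in sequentially. P n \<le> 1" using up by simp
  have "P \<longlonglongrightarrow> 1" by (rule tendsto_sandwich[OF e1 e2 L1 tendsto_const])
  then show "(\<lambda>n. measure_pmf.prob (seeded_experiment pX pYX pS (B n) n)
                        {(G1, S, G2). deletion_detected \<sigma> (B n) n G1 S G2}) \<longlonglongrightarrow> 1"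
    unfolding P_def .
qed

definition myswap :: "'a \<Rightarrow> 'a \<Rightarrow> 'a \<Rightarrow> 'a" where
  "myswap a b = (\<lambda>c. if c = a then b else if c = b then a else c)"

lemma bij_myswap: "bij (myswap a b)"
proof -
  have "myswap a b \<circ> myswap a b = id"
    by (rule ext) (simp add: myswap_def)
  then show ?thesis using o_bij by blast
qed

lemma all_perm_zero:
  fixes D :: "'a::finite \<Rightarrow> 'a \<Rightarrow> real"
  assumes col: "\<And>y. (\<Sum>x\<in>UNIV. D x y) = 0"
    and nonpos: "\<And>\<sigma>. bij \<sigma> \<Longrightarrow> (\<Sum>y\<in>UNIV. D (\<sigma> y) y) \<le> 0"
    and tau: "bij \<tau>"
  shows "(\<Sum>y\<in>UNIV. D (\<tau> y) y) = 0"
proof -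
  define N where "N = CARD('a)"
  have N0: "N > 0" unfolding N_def by simp
  obtain e :: "'a \<Rightarrow> nat" where e: "bij_betw e UNIV {..<N}"
    unfolding N_def using ex_bij_betw_finite_nat[of "UNIV :: 'a set"] by (auto simp: atLeast0LessThan)
  define ei where "ei = inv_into UNIV e"
  have eei: "\<And>i. i < N \<Longrightarrow> e (ei i) = i" unfolding ei_def using e
    by (meson bij_betw_inv_into_right lessThan_iff)
  have eie: "\<And>y. ei (e y) = y" unfolding ei_def using e by (simp add: bij_betw_def)
  have elt: "\<And>y. e y < N" using e by (auto simp: bij_betw_def)
  define sh where "sh = (\<lambda>k y. ei ((e y + k) mod N))"
  have sh0: "sh 0 = id" unfolding sh_def using elt eie by (auto simp: fun_eq_iff)
  have bijsh: "bij (sh k)" for k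
  proof -
    have "inj (sh k)"
    proof (rule injI)
      fix y y' assume "sh k y = sh k y'"
      then have "e (sh k y) = e (sh k y')" by simp
      then have "(e y + k) mod N = (e y' + k) mod N" unfolding sh_def using eei N0 by simp
      then have "e y mod N = e y' mod N" using nat_mod_eq_iff by auto
      then have "e y = e y'" using elt by simp
      then show "y = y'" by (metis eie)
    qed
    then show ?thesis using finite_UNIV_inj_surj[of "sh k"] by (simp add: bij_def)
  qed
  have col_bij: "bij_betw (\<lambda>k. \<tau> (sh k y)) {..<N} UNIV" for y
  proof -
    have inj: "inj_on (\<lambda>k. \<tau> (sh k y)) {..<N}"
    proof (rule inj_onI)
      fix k k' assume k: "k \<in> {..<N}" "k' \<in> {..<N}" and eq: "\<tau> (sh k y) = \<tau> (sh k' y)"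
      then have "sh k y = sh k' y" using tau by (simp add: bij_def inj_eq)
      then have "e (sh k y) = e (sh k' y)" by simp
      then have "(e y + k) mod N = (e y + k') mod N" unfolding sh_def using eei N0 by simp
      then have "k mod N = k' mod N" using nat_mod_eq_iff by auto
      then show "k = k'" using k by simp
    qed
    moreover have "card ((\<lambda>k. \<tau> (sh k y)) ` {..<N}) = card (UNIV :: 'a set)"
      using card_image[OF inj] unfolding N_def by simp
    then have "(\<lambda>k. \<tau> (sh k y)) ` {..<N} = UNIV"
      by (metis card_subset_eq finite_class.finite_UNIV subset_UNIV)
    ultimately show ?thesis unfolding bij_betw_def by simp
  qed
  have "(\<Sum>k<N. \<Sum>y\<in>UNIV. D (\<tau> (sh k y)) y) = (\<Sum>y\<in>UNIV. \<Sum>k<N. D (\<tau> (sh k y)) y)"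
    by (rule sum.swap)
  also have "\<dots> = (\<Sum>y\<in>UNIV. \<Sum>x\<in>UNIV. D x y)"
    by (intro sum.cong refl sum.reindex_bij_betw[of "\<lambda>k. \<tau> (sh k _)" "{..<N}" UNIV "\<lambda>x. D x _"] col_bij)
  also have "\<dots> = 0" using col by simp
  finally have tot: "(\<Sum>k<N. \<Sum>y\<in>UNIV. D (\<tau> (sh k y)) y) = 0" .
  have nn: "\<And>k. k \<in> {..<N} \<Longrightarrow> 0 \<le> - (\<Sum>y\<in>UNIV. D (\<tau> (sh k y)) y)"
  proof -
    fix k
    have "bij (\<tau> \<circ> sh k)" using tau bijsh by (rule bij_comp[rotated])
    then show "0 \<le> - (\<Sum>y\<in>UNIV. D (\<tau> (sh k y)) y)" using nonpos[of "\<tau> \<circ> sh k"] by simp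
  qed
  have "(\<Sum>k<N. - (\<Sum>y\<in>UNIV. D (\<tau> (sh k y)) y)) = 0" using tot by (simp add: sum_negf)
  then have each: "\<forall>k\<in>{..<N}. - (\<Sum>y\<in>UNIV. D (\<tau> (sh k y)) y) = 0"
    using sum_nonneg_eq_0_iff[of "{..<N}", OF _ nn] by simp
  then have "(\<Sum>y\<in>UNIV. D (\<tau> (sh 0 y)) y) = 0" using N0 by auto
  then show ?thesis using sh0 by simp
qed

lemma D_zero:
  fixes D :: "'a::finite \<Rightarrow> 'a \<Rightarrow> real"
  assumes col: "\<And>y. (\<Sum>x\<in>UNIV. D x y) = 0"
    and row: "\<And>x. (\<Sum>y\<in>UNIV. D x y) = 0"
    and nonpos: "\<And>\<sigma>. bij \<sigma> \<Longrightarrow> (\<Sum>y\<in>UNIV. D (\<sigma> y) y) \<le> 0"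
  shows "D x1 y1 = 0"
proof -
  have ident: "D x1 y1 + D x2 y2 = D x2 y1 + D x1 y2" for x1 x2 y1 y2
  proof (cases "x1 = x2 \<or> y1 = y2")
    case True
    then show ?thesis by auto
  next
    case False
    then have xx: "x1 \<noteq> x2" and yy: "y1 \<noteq> y2" by auto
    define z where "z = myswap x1 y1 y2"
    define \<tau> where "\<tau> = myswap x2 z \<circ> myswap x1 y1"
    define \<tau>' where "\<tau>' = \<tau> \<circ> myswap y1 y2"
    have zx: "z \<noteq> x1" unfolding z_def myswap_def using yy by auto
    have t1: "\<tau> y1 = x1" unfolding \<tau>_def using zx xx by (auto simp: myswap_def)
    have t2: "\<tau> y2 = x2" unfolding \<tau>_def z_def by (auto simp: myswap_def)
    have t1': "\<tau>' y1 = x2" unfolding \<tau>'_def using t2 by (simp add: myswap_def)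
    have t2': "\<tau>' y2 = x1" unfolding \<tau>'_def using t1 yy by (simp add: myswap_def)
    have t3: "\<And>y. y \<noteq> y1 \<Longrightarrow> y \<noteq> y2 \<Longrightarrow> \<tau>' y = \<tau> y" unfolding \<tau>'_def by (simp add: myswap_def)
    have bt: "bij \<tau>" unfolding \<tau>_def by (intro bij_comp bij_myswap)
    have bt': "bij \<tau>'" unfolding \<tau>'_def by (intro bij_comp bt bij_myswap)
    have s1: "(\<Sum>y\<in>UNIV. D (\<tau> y) y) = 0" by (rule all_perm_zero[OF col nonpos bt])
    have s2: "(\<Sum>y\<in>UNIV. D (\<tau>' y) y) = 0" by (rule all_perm_zero[OF col nonpos bt'])
    define g where "g = (\<lambda>y. D (\<tau> y) y - D (\<tau>' y) y)"
    have "(\<Sum>y\<in>UNIV. g y) = 0" unfolding g_def using s1 s2 by (simp add: sum_subtractf)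
    moreover have "(\<Sum>y\<in>UNIV. g y) = (\<Sum>y\<in>{y1,y2}. g y)"
      by (rule sum.mono_neutral_right) (auto simp: g_def t3)
    moreover have "(\<Sum>y\<in>{y1,y2}. g y) = g y1 + g y2" using yy by simp
    ultimately have "g y1 + g y2 = 0" by simp
    then show ?thesis unfolding g_def using t1 t2 t1' t2' by simp
  qed
  define N where "N = real CARD('a)"
  have N0: "N > 0" unfolding N_def by simp
  have "(\<Sum>x2\<in>UNIV. \<Sum>y2\<in>UNIV. D x1 y1 + D x2 y2) = (\<Sum>x2\<in>UNIV. \<Sum>y2\<in>UNIV. D x2 y1 + D x1 y2)"
    using ident by simp
  moreover have "(\<Sum>x2\<in>UNIV. \<Sum>y2\<in>UNIV. D x1 y1 + D x2 y2) = N * N * D x1 y1"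
    by (simp add: sum.distrib row N_def)
  moreover have "(\<Sum>x2\<in>UNIV. \<Sum>y2\<in>UNIV. D x2 y1 + D x1 y2) = 0"
    by (simp add: sum.distrib row col flip: sum_distrib_left)
  ultimately have "N * N * D x1 y1 = 0" by simp
  then show ?thesis using N0 by simp
qed

lemma prob_finite_sum: "measure_pmf.prob (p :: ('a::finite) pmf) A = (\<Sum>u\<in>A. pmf p u)"
  by (rule measure_measure_pmf_finite) simp

lemma part1:
  fixes pX :: "'x::finite pmf" and pYX :: "'x \<Rightarrow> 'x pmf"
  assumes dep: "joint_pmf pX pYX \<noteq> pair_pmf pX (out_pmf pX pYX)"
  shows "\<exists>\<sigma>. bij \<sigma> \<and> delta pX pYX \<sigma> > 0"
proof (rule ccontr)
  assume H: "\<not> ?thesis"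
  define J where "J = joint_pmf pX pYX"
  define PY where "PY = out_pmf pX pYX"
  define D where "D = (\<lambda>x y. pmf J (x, y) - pmf pX x * pmf PY y)"
  have mfst: "map_pmf fst J = pX" unfolding J_def by (rule map_fst_joint)
  have msnd: "map_pmf snd J = PY" unfolding J_def PY_def joint_pmf_def out_pmf_def
    by (simp add: map_bind_pmf map_pmf_comp)
  have pX_sum: "pmf pX x = (\<Sum>y\<in>UNIV. pmf J (x, y))" for x
  proof -
    have "pmf pX x = measure_pmf.prob J (fst -` {x})" unfolding mfst[symmetric] pmf_map ..
    also have "\<dots> = (\<Sum>u\<in>fst -` {x}. pmf J u)" by (rule prob_finite_sum)
    also have "fst -` {x} = Pair x ` UNIV" by auto
    also have "(\<Sum>u\<in>Pair x ` UNIV. pmf J u) = (\<Sum>y\<in>UNIV. pmf J (x, y))"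
      by (subst sum.reindex) (auto simp: inj_on_def)
    finally show ?thesis .
  qed
  have PY_sum: "pmf PY y = (\<Sum>x\<in>UNIV. pmf J (x, y))" for y
  proof -
    have "pmf PY y = measure_pmf.prob J (snd -` {y})" unfolding msnd[symmetric] pmf_map ..
    also have "\<dots> = (\<Sum>u\<in>snd -` {y}. pmf J u)" by (rule prob_finite_sum)
    also have "snd -` {y} = (\<lambda>x. (x, y)) ` UNIV" by auto
    also have "(\<Sum>u\<in>(\<lambda>x. (x, y)) ` UNIV. pmf J u) = (\<Sum>x\<in>UNIV. pmf J (x, y))"
      by (subst sum.reindex) (auto simp: inj_on_def)
    finally show ?thesis .
  qed
  have sum1: "(\<Sum>x\<in>UNIV. pmf pX x) = 1" by (rule sum_pmf_eq_1) auto
  have sum1': "(\<Sum>y\<in>UNIV. pmf PY y) = 1" by (rule sum_pmf_eq_1) auto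
  have delta_eq: "delta pX pYX \<sigma> = (\<Sum>y\<in>UNIV. D (\<sigma> y) y)" for \<sigma>
  proof -
    have a: "measure_pmf.prob J {(x, y). \<sigma> y = x} = (\<Sum>y\<in>UNIV. pmf J (\<sigma> y, y))"
    proof -
      have "{(x, y). \<sigma> y = x} = (\<lambda>y. (\<sigma> y, y)) ` UNIV" by auto
      then show ?thesis by (simp add: prob_finite_sum sum.reindex inj_on_def)
    qed
    have b: "measure_pmf.prob (pair_pmf J pX) {((x1, y1), x2). \<sigma> y1 = x2} = (\<Sum>y\<in>UNIV. pmf PY y * pmf pX (\<sigma> y))"
    proof -
      have se: "{((x1, y1), x2). \<sigma> y1 = x2} = (\<lambda>u. (u, \<sigma> (snd u))) ` UNIV" by auto
      have "measure_pmf.prob (pair_pmf J pX) {((x1, y1), x2). \<sigma> y1 = x2}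
           = (\<Sum>w\<in>(\<lambda>u. (u, \<sigma> (snd u))) ` UNIV. pmf (pair_pmf J pX) w)"
        unfolding se by (rule prob_finite_sum)
      also have "\<dots> = (\<Sum>u\<in>UNIV. pmf (pair_pmf J pX) (u, \<sigma> (snd u)))"
        by (subst sum.reindex) (auto simp: inj_on_def)
      also have "\<dots> = (\<Sum>u\<in>UNIV. pmf J u * pmf pX (\<sigma> (snd u)))"
        by (simp only: pmf_pair)
      also have "\<dots> = (\<Sum>x\<in>UNIV. \<Sum>y\<in>UNIV. pmf J (x, y) * pmf pX (\<sigma> y))"
        by (simp add: UNIV_Times_UNIV[symmetric] sum.cartesian_product case_prod_unfold del: UNIV_Times_UNIV)
      also have "\<dots> = (\<Sum>y\<in>UNIV. \<Sum>x\<in>UNIV. pmf J (x, y) * pmf pX (\<sigma> y))" by (rule sum.swap)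
      also have "\<dots> = (\<Sum>y\<in>UNIV. pmf PY y * pmf pX (\<sigma> y))"
        by (simp add: PY_sum sum_distrib_right)
      finally show ?thesis .
    qed
    show ?thesis unfolding delta_def J_def[symmetric] a b D_def
      by (simp add: sum_subtractf mult.commute)
  qed
  have col: "(\<Sum>x\<in>UNIV. D x y) = 0" for y
    unfolding D_def by (simp add: sum_subtractf PY_sum[symmetric] sum_distrib_right[symmetric] sum1)
  have row: "(\<Sum>y\<in>UNIV. D x y) = 0" for x
    unfolding D_def by (simp add: sum_subtractf pX_sum[symmetric] sum_distrib_left[symmetric] sum1')
  have nonpos: "bij \<sigma> \<Longrightarrow> (\<Sum>y\<in>UNIV. D (\<sigma> y) y) \<le> 0" for \<sigma>
    using H delta_eq[of \<sigma>] by force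
  have D0: "D x y = 0" for x y by (rule D_zero[OF col row nonpos])
  have "J = pair_pmf pX PY"
  proof (rule pmf_eqI)
    fix u :: "'x \<times> 'x"
    obtain x y where u: "u = (x, y)" by (cases u)
    show "pmf J u = pmf (pair_pmf pX PY) u"
      using D0[of x y] unfolding u D_def by (simp add: pmf_pair)
  qed
  with dep show False unfolding J_def PY_def by simp
qed

theorem lemma2:
  fixes pX :: "'x::finite pmf" and pYX :: "'x \<Rightarrow> 'x pmf"
  assumes dep: "joint_pmf pX pYX \<noteq> pair_pmf pX (out_pmf pX pYX)"
  shows "(\<exists>\<sigma>. bij \<sigma> \<and>
            measure_pmf.prob (joint_pmf pX pYX) {(x, y). \<sigma> y = x}
          > measure_pmf.prob (pair_pmf (joint_pmf pX pYX) pX) {((x1, y1), x2). \<sigma> y1 = x2})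
    \<and> (\<forall>\<sigma>. bij \<sigma> \<and>
            measure_pmf.prob (joint_pmf pX pYX) {(x, y). \<sigma> y = x}
          > measure_pmf.prob (pair_pmf (joint_pmf pX pYX) pX) {((x1, y1), x2). \<sigma> y1 = x2}
        \<longrightarrow> (\<exists>c::real. c > 0 \<and>
              (\<forall>(pS :: nat pmf) (smax :: nat) (B :: nat \<Rightarrow> nat).
                 set_pmf pS \<subseteq> {0..smax} \<and> (\<forall>n. real (B n) \<ge> c * real n) \<longrightarrow>
                 (\<lambda>n. measure_pmf.prob (seeded_experiment pX pYX pS (B n) n)
                        {(G1, S, G2). deletion_detected \<sigma> (B n) n G1 S G2})
                 \<longlonglongrightarrow> 1)))"
proof (intro conjI allI impI)
  obtain \<sigma> where s: "bij \<sigma>" "delta pX pYX \<sigma> > 0" using part1[OF dep] by blast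
  then show "\<exists>\<sigma>. bij \<sigma> \<and>
            measure_pmf.prob (joint_pmf pX pYX) {(x, y). \<sigma> y = x}
          > measure_pmf.prob (pair_pmf (joint_pmf pX pYX) pX) {((x1, y1), x2). \<sigma> y1 = x2}"
    unfolding delta_def by auto
next
  fix \<sigma> :: "'x \<Rightarrow> 'x"
  assume "bij \<sigma> \<and>
            measure_pmf.prob (joint_pmf pX pYX) {(x, y). \<sigma> y = x}
          > measure_pmf.prob (pair_pmf (joint_pmf pX pYX) pX) {((x1, y1), x2). \<sigma> y1 = x2}"
  then have "delta pX pYX \<sigma> > 0" unfolding delta_def by auto
  then show "\<exists>c::real. c > 0 \<and>
              (\<forall>(pS :: nat pmf) (smax :: nat) (B :: nat \<Rightarrow> nat).
                 set_pmf pS \<subseteq> {0..smax} \<and> (\<forall>n. real (B n) \<ge> c * real n) \<longrightarrow>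
                 (\<lambda>n. measure_pmf.prob (seeded_experiment pX pYX pS (B n) n)
                        {(G1, S, G2). deletion_detected \<sigma> (B n) n G1 S G2})
                 \<longlonglongrightarrow> 1)"
    by (rule part2)
qed

end
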